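(* Let $m\ge1$ and $2\le K\le N$ be integers with $m^2(K-1)-mN\ne0$. Put $$\Delta=(m(K-1))^2+(N-K+1)\big(m^2(K-1)-mN\big),$$ assume $\Delta\ge0$, and define $$x_0=\frac{-m(K-1)+\sqrt{\Delta}}{m^2(K-1)-mN},\qquad d=\frac{Nm}{m+\frac1{x_0}}.$$ Assume $0<x_0\le\frac12$ and $d\le N$. Use the multiplicity assignment with coefficient $t=x_0$ (received symbol multiplicity $M>0$, each 1-bit-flipped neighbour multiplicity $tM$, others $0$). Then for every transmitted codeword and every error pattern of the binary symmetric channel flipping at most $d$ bits in total, the ASD sufficient condition $S\ge\sqrt{2(K-1)C}$ holds, i.e., ASD is guaranteed to decode up to $d$ bit errors.
   Context: Setting: a Reed–Solomon code of length $N$ and dimension $K$ over $GF(2^m)$ whose symbols are sent as $m$ bits each over a binary symmetric channel. The multiplicity assignment is fixed independently of the received word: in each position the received symbol gets multiplicity $M$, each of the $m$ symbols obtained from it by flipping exactly one bit gets multiplicity $tM$ ($0\le t\le1$), and all other symbols get $0$. The score $S$ is the sum over the $N$ positions of the multiplicity assigned to the transmitted symbol; the (large-multiplicity approximation of the) cost is $C=\frac12\sum(\text{multiplicities})^2=\frac N2M^2(1+mt^2)$. *)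

theory Defs
  imports Complex_Main
begin

text \<open>A symbol of GF(2^m) is represented by its m-bit binary image, a bool list of length m.\<close>

definition symbols :: "nat \<Rightarrow> bool list set" where
  "symbols m = {s. length s = m}"

definition bit_dist :: "bool list \<Rightarrow> bool list \<Rightarrow> nat" where
  "bit_dist x y = card {j. j < length x \<and> x ! j \<noteq> y ! j}"

definition mult :: "real \<Rightarrow> real \<Rightarrow> bool list \<Rightarrow> bool list \<Rightarrow> real" where
  "mult M t r s = (if s = r then M else if bit_dist r s = 1 then t * M else 0)"

definition score :: "nat \<Rightarrow> real \<Rightarrow> real \<Rightarrow> (nat \<Rightarrow> bool list) \<Rightarrow> (nat \<Rightarrow> bool list) \<Rightarrow> real" where
  "score N M t r c = (\<Sum>i<N. mult M t (r i) (c i))"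

text \<open>Cost (large-multiplicity approximation): half the sum of squared multiplicities.\<close>
definition cost :: "nat \<Rightarrow> nat \<Rightarrow> real \<Rightarrow> real \<Rightarrow> (nat \<Rightarrow> bool list) \<Rightarrow> real" where
  "cost N m M t r = (1/2) * (\<Sum>i<N. \<Sum>s\<in>symbols m. (mult M t (r i) s)^2)"

definition bit_errors :: "nat \<Rightarrow> (nat \<Rightarrow> bool list) \<Rightarrow> (nat \<Rightarrow> bool list) \<Rightarrow> nat" where
  "bit_errors N r c = (\<Sum>i<N. bit_dist (r i) (c i))"

end

theory Submission
  imports Defs
begin


lemma bit_dist_0_eq:
  assumes "length s = length r" "bit_dist r s = 0" shows "s = r"
proof (rule nth_equalityI)
  show "length s = length r" by fact
  have "finite {j. j < length r \<and> r ! j \<noteq> s ! j}" by simp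
  then have "{j. j < length r \<and> r ! j \<noteq> s ! j} = {}" using assms(2) unfolding bit_dist_def by simp
  then show "\<And>i. i < length s \<Longrightarrow> s ! i = r ! i" using assms(1) by auto
qed

lemma bit_dist_refl: "bit_dist r r = 0"
  unfolding bit_dist_def by simp

definition flip :: "bool list \<Rightarrow> nat \<Rightarrow> bool list" where
  "flip r j = r[j := \<not> r ! j]"

lemma bit_dist_flip: "j < length r \<Longrightarrow> bit_dist r (flip r j) = 1"
proof -
  assume j: "j < length r"
  have "{k. k < length r \<and> r ! k \<noteq> flip r j ! k} = {j}"
    using j by (auto simp: flip_def nth_list_update)
  then show ?thesis unfolding bit_dist_def by simp
qed

lemma bit_dist_1_flip:
  assumes "length s = length r" "bit_dist r s = 1"
  shows "\<exists>j<length r. s = flip r j"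
proof -
  from assms(2) have "card {k. k < length r \<and> r ! k \<noteq> s ! k} = 1" unfolding bit_dist_def .
  then obtain j where j: "{k. k < length r \<and> r ! k \<noteq> s ! k} = {j}"
    by (rule card_1_singletonE)
  then have jl: "j < length r" and jn: "r ! j \<noteq> s ! j" by auto
  have "s = flip r j"
  proof (rule nth_equalityI)
    show "length s = length (flip r j)" using assms(1) by (simp add: flip_def)
    fix i assume "i < length s"
    then show "s ! i = flip r j ! i"
      using j jn assms(1) by (cases "i = j") (auto simp: flip_def nth_list_update)
  qed
  then show ?thesis using jl by blast
qed

lemma card_neigh:
  assumes "length r = m"
  shows "card {s \<in> symbols m. bit_dist r s = 1} = m"
proof -
  have eq: "{s \<in> symbols m. bit_dist r s = 1} = flip r ` {..<m}"
  proof
    show "{s \<in> symbols m. bit_dist r s = 1} \<subseteq> flip r ` {..<m}"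
      using assms bit_dist_1_flip by (fastforce simp: symbols_def)
    show "flip r ` {..<m} \<subseteq> {s \<in> symbols m. bit_dist r s = 1}"
      using assms bit_dist_flip by (auto simp: symbols_def flip_def)
  qed
  have "inj_on (flip r) {..<m}"
  proof (rule inj_onI)
    fix i j assume i: "i \<in> {..<m}" and j: "j \<in> {..<m}" and e: "flip r i = flip r j"
    show "i = j"
    proof (rule ccontr)
      assume "i \<noteq> j"
      then have "flip r i ! i \<noteq> flip r j ! i" using i j assms by (simp add: flip_def nth_list_update)
      then show False using e by simp
    qed
  qed
  then show ?thesis using eq card_image by fastforce
qed

lemma finite_symbols: "finite (symbols m)"
proof -
  have "symbols m = {s. set s \<subseteq> UNIV \<and> length s = m}" by (simp add: symbols_def)
  then show ?thesis using finite_lists_length_eq[of "UNIV :: bool set" m] by simp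
qed

lemma sum_sq:
  assumes "r \<in> symbols m"
  shows "(\<Sum>s\<in>symbols m. (mult M t r s)^2) = M^2 + real m * (t*M)^2"
proof -
  have f: "finite (symbols m)" by (rule finite_symbols)
  have "(\<Sum>s\<in>symbols m. (mult M t r s)^2)
     = (\<Sum>s\<in>symbols m. (if s = r then M^2 else 0) + (if bit_dist r s = 1 then (t*M)^2 else 0))"
    by (rule sum.cong) (auto simp: mult_def bit_dist_refl)
  also have "\<dots> = (\<Sum>s\<in>symbols m. if s = r then M^2 else 0) + (\<Sum>s\<in>symbols m. if bit_dist r s = 1 then (t*M)^2 else 0)"
    by (rule sum.distrib)
  also have "(\<Sum>s\<in>symbols m. if s = r then M^2 else 0) = M^2"
    using f assms by (simp add: sum.delta')
  also have "(\<Sum>s\<in>symbols m. if bit_dist r s = 1 then (t*M)^2 else 0) = real (card {s \<in> symbols m. bit_dist r s = 1}) * (t*M)^2"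
    using f by (simp add: sum.If_cases Int_def conj_commute)
  also have "card {s \<in> symbols m. bit_dist r s = 1} = m"
    using assms by (intro card_neigh) (simp add: symbols_def)
  finally show ?thesis .
qed

lemma mult_lower:
  assumes "r \<in> symbols m" "c \<in> symbols m" "M > 0" "t \<le> 1/2"
  shows "mult M t r c \<ge> M - (1 - t) * M * real (bit_dist r c)"
proof (cases "c = r")
  case True then show ?thesis by (simp add: mult_def bit_dist_refl)
next
  case False
  have ne: "bit_dist r c \<noteq> 0" using False bit_dist_0_eq assms(1,2) by (auto simp: symbols_def)
  show ?thesis
  proof (cases "bit_dist r c = 1")
    case True then show ?thesis using False by (simp add: mult_def algebra_simps)
  next
    case F: False
    then have "real (bit_dist r c) \<ge> 2" using ne by simp
    then have "(1 - t) * M * real (bit_dist r c) \<ge> (1 - t) * M * 2"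
      using assms by (intro mult_left_mono) auto
    moreover have "(1 - t) * M * 2 \<ge> M" using assms by (simp add: algebra_simps)
    ultimately show ?thesis using False F by (simp add: mult_def)
  qed
qed



theorem theorem2:
  fixes m K N :: nat and M :: real
    and c r :: "nat \<Rightarrow> bool list"
  assumes "m \<ge> 1" and "2 \<le> K" and "K \<le> N"
    and "real m ^ 2 * (real K - 1) - real m * real N \<noteq> 0"
    and "(real m * (real K - 1))^2 + (real N - real K + 1) * (real m ^ 2 * (real K - 1) - real m * real N) \<ge> 0"
    and "0 < (- real m * (real K - 1) + sqrt ((real m * (real K - 1))^2 + (real N - real K + 1) * (real m ^ 2 * (real K - 1) - real m * real N)))
              / (real m ^ 2 * (real K - 1) - real m * real N)"
    and "(- real m * (real K - 1) + sqrt ((real m * (real K - 1))^2 + (real N - real K + 1) * (real m ^ 2 * (real K - 1) - real m * real N)))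
              / (real m ^ 2 * (real K - 1) - real m * real N) \<le> 1/2"
    and "real N * real m / (real m + 1 / ((- real m * (real K - 1) + sqrt ((real m * (real K - 1))^2 + (real N - real K + 1) * (real m ^ 2 * (real K - 1) - real m * real N)))
              / (real m ^ 2 * (real K - 1) - real m * real N))) \<le> real N"
    and "M > 0"
    and "\<forall>i<N. c i \<in> symbols m" and "\<forall>i<N. r i \<in> symbols m"
    and "real (bit_errors N r c) \<le> real N * real m / (real m + 1 / ((- real m * (real K - 1) + sqrt ((real m * (real K - 1))^2 + (real N - real K + 1) * (real m ^ 2 * (real K - 1) - real m * real N)))
              / (real m ^ 2 * (real K - 1) - real m * real N)))"
  shows "let t = (- real m * (real K - 1) + sqrt ((real m * (real K - 1))^2 + (real N - real K + 1) * (real m ^ 2 * (real K - 1) - real m * real N)))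
              / (real m ^ 2 * (real K - 1) - real m * real N)
         in score N M t r c \<ge> sqrt (2 * (real K - 1) * cost N m M t r)"
  proof -
  define a where "a = real m ^ 2 * (real K - 1) - real m * real N"
  define D where "D = (real m * (real K - 1))^2 + (real N - real K + 1) * (real m ^ 2 * (real K - 1) - real m * real N)"
  define t where "t = (- real m * (real K - 1) + sqrt D) / a"
  have a0: "a \<noteq> 0" using assms(4) by (simp add: a_def)
  have D0: "D \<ge> 0" using assms(5) by (simp add: D_def)
  have tpos: "t > 0" using assms(6) by (simp add: t_def D_def a_def)
  have thalf: "t \<le> 1/2" using assms(7) by (simp add: t_def D_def a_def)
  have err: "real (bit_errors N r c) \<le> real N * real m / (real m + 1 / t)"
    using assms(12) by (simp add: t_def D_def a_def)
  have "t * a = - real m * (real K - 1) + sqrt D" using a0 by (simp add: t_def)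
  then have "(t * a + real m * (real K - 1))^2 = D" using D0 by simp
  then have "a * (a * t^2 + 2 * real m * (real K - 1) * t - (real N - real K + 1)) = 0"
    unfolding D_def a_def[symmetric] by (simp add: algebra_simps power2_eq_square)
  then have q: "a * t^2 + 2 * real m * (real K - 1) * t - (real N - real K + 1) = 0" using a0 by simp
  have key: "(real K - 1) * (1 + real m * t)^2 = real N * (1 + real m * t^2)"
    using q unfolding a_def by (simp add: algebra_simps power2_eq_square)
  have mt: "1 + real m * t > 0" using tpos by (simp add: add_pos_nonneg)
  have dd: "real N * real m / (real m + 1 / t) = real N * real m * t / (1 + real m * t)"
    using tpos by (simp add: field_simps)
  define Y where "Y = M * real N * (1 + real m * t^2) / (1 + real m * t)"
  have Y0: "Y \<ge> 0" using mt assms(9) by (simp add: Y_def)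
  have "Y = real N * M - (1 - t) * M * (real N * real m * t / (1 + real m * t))"
    using mt by (simp add: Y_def field_simps power2_eq_square)
  also have "\<dots> \<le> real N * M - (1 - t) * M * real (bit_errors N r c)"
    using err dd thalf assms(9) by (intro diff_left_mono mult_left_mono) auto
  also have "\<dots> = (\<Sum>i<N. M - (1 - t) * M * real (bit_dist (r i) (c i)))"
    by (simp add: bit_errors_def sum_subtractf sum_distrib_left)
  also have "\<dots> \<le> score N M t r c"
    unfolding score_def using assms(10,11) assms(9) thalf by (intro sum_mono mult_lower) auto
  finally have sc: "Y \<le> score N M t r c" .
  have "cost N m M t r = (1/2) * (\<Sum>i<N. M^2 + real m * (t*M)^2)"
    unfolding cost_def using assms(11) by (simp add: sum_sq)
  then have "2 * (real K - 1) * cost N m M t r = (real K - 1) * real N * M^2 * (1 + real m * t^2)"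
    by (simp add: field_simps power2_eq_square)
  also have "\<dots> = Y^2"
  proof -
    have "(real K - 1) = real N * (1 + real m * t^2) / (1 + real m * t)^2"
      using key mt by (simp add: field_simps)
    then show ?thesis by (simp add: Y_def power2_eq_square field_simps)
  qed
  finally have "sqrt (2 * (real K - 1) * cost N m M t r) = Y" using Y0 by simp
  then show ?thesis using sc unfolding Let_def t_def D_def a_def by simp
qed

end
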